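(* Fix the parameters $S_1,\dots,S_{\mathcal K}$, $\lambda_1,\dots,\lambda_{\mathcal K}$ of the storage model in the context. Suppose that the linear system \[ \sum_{j=1}^{\kappa_i}\alpha_{ij}=\lambda_i\ (i=1,\dots,\mathcal K),\qquad \sum_{i=1}^{\mathcal K}\sum_{j=1}^{\kappa_i}\alpha_{ij}\,\delta_{\ell,s^i_j}=\tfrac1n\ (\ell=1,\dots,n) \] has no non-negative solution $(\alpha_{ij})$. Then for any routing policy $P$, the shape process $\tilde X(t)$ with routing policy $P$ is transient.
   Context: Storage model: there are $n$ nodes $\{1,\dots,n\}$ and $\mathcal K\ge1$ non-empty neighborhoods $S_1,\dots,S_{\mathcal K}\subset\{1,\dots,n\}$ with $\bigcup_i S_i=\{1,\dots,n\}$; $\kappa_i=|S_i|$ and $S_i=\{s^i_1,\dots,s^i_{\kappa_i}\}$. Items arrive at $S_i$ as independent Poisson processes with rates $\lambda_i>0$, $\sum_{i=1}^{\mathcal K}\lambda_i=1$. Let $\Lambda_i=\{p\in\mathbb R^{\kappa_i}:p_j\ge0,\sum_j p_j=1\}$. A routing policy is a map $P:\mathbb N^n\to\Lambda_1\times\dots\times\Lambda_{\mathcal K}$ with $P(x+c\mathbf 1)=P(x)$ for all integers $c$; an item arriving at $S_i$ when the configuration is $x$ is stored at node $s^i_j$ with probability $p^{(i)}_j(x)$, independently for each arrival. $X(t)$ is the vector of node loads, $M(t)=\frac1n\sum_iX_i(t)$, the shape is $\tilde X(t)=X(t)-M(t)\mathbf 1$, and $\tilde X^e(m)$ is the shape observed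 at successive arrival moments. With $\tau=\inf\{m>0:\tilde X^e(m)=0\}$, the process is called transient if $\mathbf P(\tau=\infty\mid\tilde X^e(0)=0)>0$. $\delta_{\ell,m}$ is the Kronecker delta. *)

theory Defs
  imports Complex_Main
begin

text \<open>Nodes are the elements of a finite type 'n (so n = CARD('n)).
  Neighbourhoods are indexed by i < K; neighbourhood i is the list S i = [s_1,...,s_kappa_i]
  of distinct nodes. A routing policy is
  p :: ('n => nat) => nat => nat => real with p x i j the probability p^(i)_j(x)
  (list index j < length (S i)).\<close>

definition storage_model :: "nat \<Rightarrow> (nat \<Rightarrow> 'n::finite list) \<Rightarrow> (nat \<Rightarrow> real) \<Rightarrow> bool" where
  "storage_model K S lam \<longleftrightarrow> K \<ge> 1
     \<and> (\<forall>i<K. S i \<noteq> [] \<and> distinct (S i))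
     \<and> (\<Union>i<K. set (S i)) = UNIV
     \<and> (\<forall>i<K. lam i > 0) \<and> (\<Sum>i<K. lam i) = 1"

definition routing_policy :: "nat \<Rightarrow> (nat \<Rightarrow> 'n::finite list) \<Rightarrow> (('n \<Rightarrow> nat) \<Rightarrow> nat \<Rightarrow> nat \<Rightarrow> real) \<Rightarrow> bool" where
  "routing_policy K S p \<longleftrightarrow>
     (\<forall>x. \<forall>i<K. (\<forall>j<length (S i). p x i j \<ge> 0) \<and> (\<Sum>j<length (S i). p x i j) = 1)
     \<and> (\<forall>x (c::nat). \<forall>i<K. \<forall>j<length (S i). p (\<lambda>l. x l + c) i j = p x i j)"

definition step_prob :: "nat \<Rightarrow> (nat \<Rightarrow> 'n::finite list) \<Rightarrow> (nat \<Rightarrow> real)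
    \<Rightarrow> (('n \<Rightarrow> nat) \<Rightarrow> nat \<Rightarrow> nat \<Rightarrow> real) \<Rightarrow> ('n \<Rightarrow> nat) \<Rightarrow> 'n \<Rightarrow> real" where
  "step_prob K S lam p x l =
     (\<Sum>i<K. lam i * (\<Sum>j<length (S i). p x i j * (if S i ! j = l then 1 else 0)))"

definition add_item :: "('n \<Rightarrow> nat) \<Rightarrow> 'n \<Rightarrow> ('n \<Rightarrow> nat)" where
  "add_item x l = x(l := x l + 1)"

definition config_after :: "('n \<Rightarrow> nat) \<Rightarrow> 'n list \<Rightarrow> ('n \<Rightarrow> nat)" where
  "config_after x ls = foldl add_item x ls"

fun path_prob :: "nat \<Rightarrow> (nat \<Rightarrow> 'n::finite list) \<Rightarrow> (nat \<Rightarrow> real)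
    \<Rightarrow> (('n \<Rightarrow> nat) \<Rightarrow> nat \<Rightarrow> nat \<Rightarrow> real) \<Rightarrow> ('n \<Rightarrow> nat) \<Rightarrow> 'n list \<Rightarrow> real" where
  "path_prob K S lam p x [] = 1"
| "path_prob K S lam p x (l # ls) = step_prob K S lam p x l * path_prob K S lam p (add_item x l) ls"

definition shape_zero :: "('n \<Rightarrow> nat) \<Rightarrow> bool" where
  "shape_zero x \<longleftrightarrow> (\<forall>a b. x a = x b)"

text \<open>P(tau = m | X^e(0) = x): first return of the shape to 0 at arrival m > 0.\<close>
definition first_return_prob :: "nat \<Rightarrow> (nat \<Rightarrow> 'n::finite list) \<Rightarrow> (nat \<Rightarrow> real)
    \<Rightarrow> (('n \<Rightarrow> nat) \<Rightarrow> nat \<Rightarrow> nat \<Rightarrow> real) \<Rightarrow> ('n \<Rightarrow> nat) \<Rightarrow> nat \<Rightarrow> real" where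
  "first_return_prob K S lam p x m =
     (\<Sum>ls \<in> {ls. length ls = m \<and> m > 0 \<and> shape_zero (config_after x ls)
                 \<and> (\<forall>k. 0 < k \<and> k < m \<longrightarrow> \<not> shape_zero (config_after x (take k ls)))}.
        path_prob K S lam p x ls)"

text \<open>Transience: P(tau = infinity | shape 0 at start) > 0, i.e. P(tau < infinity) < 1.\<close>
definition transient :: "nat \<Rightarrow> (nat \<Rightarrow> 'n::finite list) \<Rightarrow> (nat \<Rightarrow> real)
    \<Rightarrow> (('n \<Rightarrow> nat) \<Rightarrow> nat \<Rightarrow> nat \<Rightarrow> real) \<Rightarrow> bool" where
  "transient K S lam p \<longleftrightarrow>
     (\<forall>x. shape_zero x \<longrightarrow>
        summable (first_return_prob K S lam p x) \<and> suminf (first_return_prob K S lam p x) < 1)"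

end

theory Submission imports Defs "HOL-Analysis.Analysis"
begin

definition Ecv :: "(nat \<Rightarrow> 'n::finite list) \<Rightarrow> nat \<Rightarrow> (real^'n) set" where
  "Ecv S i = convex hull ((\<lambda>s. axis s 1) ` set (S i))"

fun Dk :: "(nat \<Rightarrow> 'n::finite list) \<Rightarrow> (nat \<Rightarrow> real) \<Rightarrow> nat \<Rightarrow> (real^'n) set" where
  "Dk S lam 0 = {0}"
| "Dk S lam (Suc k) = (\<Union>y\<in>Dk S lam k. \<Union>z\<in>(\<lambda>z. lam k *\<^sub>R z) ` Ecv S k. {y + z})"

lemma Ecv_compact: "compact (Ecv S i)" "convex (Ecv S i)"
  unfolding Ecv_def by (auto intro: compact_convex_hull finite_imp_compact)

lemma Dk_cc: "compact (Dk S lam k) \<and> convex (Dk S lam k)"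
proof (induction k)
  case 0 then show ?case by auto
next
  case (Suc k)
  then show ?case using Ecv_compact[of S k] unfolding Dk.simps
    by (intro conjI compact_sums' convex_sums compact_scaling convex_scaling) auto
qed

lemma Ecv_mem:
  assumes "\<forall>j<length (S i). q j \<ge> 0" "(\<Sum>j<length (S i). q j) = 1"
  shows "(\<chi> l. \<Sum>j<length (S i). q j * (if S i ! j = l then 1 else 0)) \<in> Ecv S i"
proof -
  have "(\<chi> l. \<Sum>j<length (S i). q j * (if S i ! j = l then 1 else 0))
     = (\<Sum>j<length (S i). q j *\<^sub>R axis (S i ! j) (1::real))"
    by (auto simp: vec_eq_iff sum_component axis_def intro!: sum.cong)
  also have "\<dots> \<in> Ecv S i" unfolding Ecv_def
    by (rule convex_sum) (use assms in \<open>auto intro!: hull_inc\<close>)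
  finally show ?thesis .
qed

lemma Dk_mem:
  assumes "\<forall>i<k. \<forall>j<length (S i). q i j \<ge> 0" "\<forall>i<k. (\<Sum>j<length (S i). q i j) = 1"
  shows "(\<chi> l. \<Sum>i<k. lam i * (\<Sum>j<length (S i). q i j * (if S i ! j = l then 1 else 0))) \<in> Dk S lam k"
  using assms
proof (induction k)
  case 0 then show ?case by (simp add: vec_eq_iff)
next
  case (Suc k)
  let ?y = "(\<chi> l. \<Sum>i<k. lam i * (\<Sum>j<length (S i). q i j * (if S i ! j = l then 1 else 0)))"
  let ?z = "(\<chi> l. \<Sum>j<length (S k). q k j * (if S k ! j = l then 1 else 0))"
  have y: "?y \<in> Dk S lam k" using Suc by auto
  have z: "?z \<in> Ecv S k" using Suc.prems by (intro Ecv_mem) auto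
  have "(\<chi> l. \<Sum>i<Suc k. lam i * (\<Sum>j<length (S i). q i j * (if S i ! j = l then 1 else 0)))
      = ?y + lam k *\<^sub>R ?z" by (simp add: vec_eq_iff)
  then show ?case using y z by auto
qed

lemma Ecv_inv:
  assumes "z \<in> Ecv S i" "distinct (S i)"
  shows "\<exists>q. (\<forall>j<length (S i). q j \<ge> 0) \<and> (\<Sum>j<length (S i). q j) = 1
     \<and> (\<forall>l. z $ l = (\<Sum>j<length (S i). q j * (if l = S i ! j then 1 else 0)))"
proof -
  let ?A = "(\<lambda>s. axis s (1::real)) ` set (S i)"
  let ?g = "\<lambda>j. axis (S i ! j) (1::real)"
  obtain u where u: "\<forall>x\<in>?A. 0 \<le> u x" "sum u ?A = 1" "(\<Sum>x\<in>?A. u x *\<^sub>R x) = z"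
    using assms(1) unfolding Ecv_def by (auto simp: convex_hull_finite)
  have inj: "inj_on ?g {..<length (S i)}"
    using assms(2) by (auto simp: inj_on_def axis_eq_axis nth_eq_iff_index_eq)
  have img: "?g ` {..<length (S i)} = ?A"
    by (auto simp: set_conv_nth)
  have re: "sum h ?A = (\<Sum>j<length (S i). h (?g j))" for h
    using sum.reindex[OF inj, of h] img by simp
  show ?thesis
  proof (intro exI conjI allI impI)
    show "\<And>j. j < length (S i) \<Longrightarrow> 0 \<le> u (?g j)" using u(1) by (auto dest: nth_mem)
    show "(\<Sum>j<length (S i). u (?g j)) = 1" using u(2) re[of u] by simp
    fix l
    have "z $ l = (\<Sum>x\<in>?A. u x * x $ l)" using u(3)[symmetric] by (simp add: sum_component)
    also have "\<dots> = (\<Sum>j<length (S i). u (?g j) * (?g j) $ l)" by (rule re)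
    also have "\<dots> = (\<Sum>j<length (S i). u (?g j) * (if l = S i ! j then 1 else 0))"
      by (intro sum.cong) (auto simp: axis_def)
    finally show "z $ l = (\<Sum>j<length (S i). u (?g j) * (if l = S i ! j then 1 else 0))" .
  qed
qed

lemma Dk_inv:
  assumes "y \<in> Dk S lam k" "\<forall>i<k. distinct (S i)" "\<forall>i<k. lam i \<ge> 0"
  shows "\<exists>\<alpha>::nat\<Rightarrow>nat\<Rightarrow>real. (\<forall>i<k. \<forall>j<length (S i). \<alpha> i j \<ge> 0)
            \<and> (\<forall>i<k. (\<Sum>j<length (S i). \<alpha> i j) = lam i)
            \<and> (\<forall>l. (\<Sum>i<k. \<Sum>j<length (S i). \<alpha> i j * (if l = S i ! j then 1 else 0)) = y $ l)"
  using assms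
proof (induction k arbitrary: y)
  case 0 then show ?case by auto
next
  case (Suc k)
  obtain y' z where y': "y' \<in> Dk S lam k" and z: "z \<in> Ecv S k" and y: "y = y' + lam k *\<^sub>R z"
    using Suc.prems(1) by auto
  obtain \<alpha> where a: "(\<forall>i<k. \<forall>j<length (S i). \<alpha> i j \<ge> 0)"
            "(\<forall>i<k. (\<Sum>j<length (S i). \<alpha> i j) = lam i)"
            "(\<forall>l. (\<Sum>i<k. \<Sum>j<length (S i). \<alpha> i j * (if l = S i ! j then 1 else 0)) = y' $ l)"
    using Suc.IH[OF y'] Suc.prems(2,3) by auto
  obtain q where q: "(\<forall>j<length (S k). q j \<ge> 0)" "(\<Sum>j<length (S k). q j) = 1"
     "(\<forall>l. z $ l = (\<Sum>j<length (S k). q j * (if l = S k ! j then 1 else 0)))"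
    using Ecv_inv[OF z] Suc.prems(2) by auto
  have lamk: "lam k \<ge> 0 \<or> True" by simp
  let ?b = "\<alpha>(k := (\<lambda>j. lam k * q j))"
  show ?case
  proof (intro exI[of _ ?b] conjI allI impI)
    fix i j assume "i < Suc k" "j < length (S i)"
    then show "0 \<le> ?b i j" using a(1) q(1) Suc.prems(3) by (auto simp: less_Suc_eq)
  next
    fix i assume "i < Suc k"
    then show "(\<Sum>j<length (S i). ?b i j) = lam i" using a(2) q(2)
      by (auto simp: less_Suc_eq sum_distrib_left[symmetric])
  next
    fix l
    have "(\<Sum>i<Suc k. \<Sum>j<length (S i). ?b i j * (if l = S i ! j then 1 else 0))
       = (\<Sum>i<k. \<Sum>j<length (S i). \<alpha> i j * (if l = S i ! j then 1 else 0))
         + lam k * (\<Sum>j<length (S k). q j * (if l = S k ! j then 1 else 0))"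
      by (simp add: sum_distrib_left mult.assoc)
    also have "\<dots> = y $ l" using a(3) q(3) y by simp
    finally show "(\<Sum>i<Suc k. \<Sum>j<length (S i). ?b i j * (if l = S i ! j then 1 else 0)) = y $ l" .
  qed
qed


fun G :: "(('n::finite\<Rightarrow>nat) \<Rightarrow> 'n \<Rightarrow> real) \<Rightarrow> (('n\<Rightarrow>nat) \<Rightarrow> bool) \<Rightarrow> nat \<Rightarrow> ('n\<Rightarrow>nat) \<Rightarrow> real" where
  "G sp st 0 x = 0"
| "G sp st (Suc N) x = (\<Sum>l\<in>UNIV. sp x l * (if st (add_item x l) then 1 else G sp st N (add_item x l)))"

lemma G_bounds:
  assumes "\<And>x l. sp x l \<ge> 0" "\<And>x. (\<Sum>l\<in>UNIV. sp x l) = 1"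
  shows "0 \<le> G sp st N x \<and> G sp st N x \<le> 1"
proof (induction N arbitrary: x)
  case 0 then show ?case by simp
next
  case (Suc N)
  have "G sp st (Suc N) x \<le> (\<Sum>l\<in>UNIV. sp x l)"
    unfolding G.simps by (intro sum_mono mult_left_le) (use Suc assms in auto)
  moreover have "0 \<le> G sp st (Suc N) x"
    using Suc assms by (auto intro!: sum_nonneg mult_nonneg_nonneg)
  ultimately show ?case using assms(2) by simp
qed

lemma G_mono:
  assumes "\<And>x l. sp x l \<ge> 0" "\<And>x. (\<Sum>l\<in>UNIV. sp x l) = 1"
    and "\<And>x. st1 x \<Longrightarrow> st2 x"
  shows "G sp st1 N x \<le> G sp st2 N x"
proof (induction N arbitrary: x)
  case 0 then show ?case by simp
next
  case (Suc N)
  show ?case unfolding G.simps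
  proof (intro sum_mono mult_left_mono)
    fix l
    show "(if st1 (add_item x l) then 1 else G sp st1 N (add_item x l))
        \<le> (if st2 (add_item x l) then 1 else G sp st2 N (add_item x l))"
      using Suc assms(3) G_bounds[OF assms(1,2), where st=st1 and N=N and x="add_item x l"] by auto
  qed (use assms in auto)
qed

lemma G_exp:
  fixes Y :: "('n::finite \<Rightarrow> nat) \<Rightarrow> real"
  assumes "\<And>x l. sp x l \<ge> 0" "\<And>x. (\<Sum>l\<in>UNIV. sp x l) = 1"
    and key: "\<And>x. (\<Sum>l\<in>UNIV. sp x l * exp (- \<theta> * (Y (add_item x l) - Y x))) \<le> 1"
    and th: "\<theta> > 0"
  shows "Y x > 0 \<Longrightarrow> G sp (\<lambda>x. Y x \<le> 0) N x \<le> exp (- \<theta> * Y x)"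
proof (induction N arbitrary: x)
  case 0 then show ?case by simp
next
  case (Suc N)
  have "G sp (\<lambda>x. Y x \<le> 0) (Suc N) x \<le> (\<Sum>l\<in>UNIV. sp x l * exp (- \<theta> * Y (add_item x l)))"
    unfolding G.simps
  proof (intro sum_mono mult_left_mono)
    fix l
    show "(if Y (add_item x l) \<le> 0 then 1 else G sp (\<lambda>x. Y x \<le> 0) N (add_item x l))
        \<le> exp (- \<theta> * Y (add_item x l))"
      using Suc.IH[of "add_item x l"] th by (auto simp: mult_nonneg_nonpos)
  qed (use assms in auto)
  also have "\<dots> = exp (- \<theta> * Y x) * (\<Sum>l\<in>UNIV. sp x l * exp (- \<theta> * (Y (add_item x l) - Y x)))"
    by (simp add: sum_distrib_left algebra_simps flip: exp_add)
  also have "\<dots> \<le> exp (- \<theta> * Y x) * 1"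
    by (intro mult_left_mono key) auto
  finally show ?case by simp
qed

definition FRset :: "('n \<Rightarrow> nat) \<Rightarrow> nat \<Rightarrow> 'n list set" where
  "FRset x m = {ls. length ls = m \<and> m > 0 \<and> shape_zero (config_after x ls)
                 \<and> (\<forall>k. 0 < k \<and> k < m \<longrightarrow> \<not> shape_zero (config_after x (take k ls)))}"

lemma sum_lists_Suc:
  fixes f :: "'n::finite list \<Rightarrow> real"
  shows "(\<Sum>ls\<in>{ls. length ls = Suc m \<and> P ls}. f ls)
       = (\<Sum>l\<in>UNIV. \<Sum>ls\<in>{ls. length ls = m \<and> P (l#ls)}. f (l#ls))"
proof -
  have fin: "finite {ls::'n list. length ls = m \<and> Q ls}" for Q m
    by (rule finite_subset[OF _ finite_lists_length_eq[OF finite_class.finite_UNIV, of m]]) auto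
  have eq: "{ls. length ls = Suc m \<and> P ls} = (\<lambda>(l,ls). l#ls) ` (SIGMA l:UNIV. {ls. length ls = m \<and> P (l#ls)})"
    by (auto simp: image_iff length_Suc_conv)
  have inj: "inj_on (\<lambda>(l,ls). l#ls) (SIGMA l:UNIV. {ls::'n list. length ls = m \<and> P (l#ls)})"
    by (auto simp: inj_on_def)
  show ?thesis
    unfolding eq sum.reindex[OF inj]
    by (subst sum.Sigma) (auto simp: fin split_def intro!: sum.cong)
qed

lemma FR_fin: "finite (FRset (x::'n::finite \<Rightarrow> nat) m)"
  by (rule finite_subset[OF _ finite_lists_length_eq[OF finite_class.finite_UNIV, of m]]) (auto simp: FRset_def)

lemma FR_eq: "first_return_prob K S lam p x m = (\<Sum>ls\<in>FRset x m. path_prob K S lam p x ls)"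
  unfolding first_return_prob_def FRset_def by simp

lemma FR_0: "first_return_prob K S lam p x 0 = 0"
  unfolding FR_eq FRset_def by simp

lemma cfg_Cons: "config_after x (l # ls) = config_after (add_item x l) ls"
  by (simp add: config_after_def)

lemma FR_1: "first_return_prob K S lam p x (Suc 0)
   = (\<Sum>l\<in>UNIV. step_prob K S lam p x l * (if shape_zero (add_item x l) then 1 else 0))"
proof -
  have "first_return_prob K S lam p x (Suc 0)
    = (\<Sum>ls\<in>{ls. length ls = Suc 0 \<and> shape_zero (config_after x ls)}. path_prob K S lam p x ls)"
    unfolding FR_eq FRset_def by simp
  also have "\<dots> = (\<Sum>l\<in>UNIV. \<Sum>ls\<in>{ls. length ls = 0 \<and> shape_zero (config_after x (l#ls))}. path_prob K S lam p x (l#ls))"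
    by (rule sum_lists_Suc)
  also have "\<dots> = (\<Sum>l\<in>UNIV. step_prob K S lam p x l * (if shape_zero (add_item x l) then 1 else 0))"
  proof (rule sum.cong)
    fix l
    have "{ls. length ls = 0 \<and> shape_zero (config_after x (l#ls))} = (if shape_zero (add_item x l) then {[]} else {})"
      by (auto simp: cfg_Cons config_after_def)
    then show "(\<Sum>ls\<in>{ls. length ls = 0 \<and> shape_zero (config_after x (l#ls))}. path_prob K S lam p x (l#ls))
       = step_prob K S lam p x l * (if shape_zero (add_item x l) then 1 else 0)" by simp
  qed simp
  finally show ?thesis .
qed

lemma FR_SS: "first_return_prob K S lam p x (Suc (Suc m))
   = (\<Sum>l\<in>UNIV. step_prob K S lam p x l * (if shape_zero (add_item x l) then 0
        else first_return_prob K S lam p (add_item x l) (Suc m)))"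
proof -
  have "first_return_prob K S lam p x (Suc (Suc m))
    = (\<Sum>ls\<in>{ls. length ls = Suc (Suc m) \<and> ls \<in> FRset x (Suc (Suc m))}. path_prob K S lam p x ls)"
    unfolding FR_eq by (rule sum.cong) (auto simp: FRset_def)
  also have "\<dots> = (\<Sum>l\<in>UNIV. \<Sum>ls\<in>{ls. length ls = Suc m \<and> (l#ls) \<in> FRset x (Suc (Suc m))}. path_prob K S lam p x (l#ls))"
    by (rule sum_lists_Suc)
  also have "\<dots> = (\<Sum>l\<in>UNIV. step_prob K S lam p x l * (if shape_zero (add_item x l) then 0
        else first_return_prob K S lam p (add_item x l) (Suc m)))"
  proof (rule sum.cong)
    fix l
    have "{ls. length ls = Suc m \<and> (l#ls) \<in> FRset x (Suc (Suc m))}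
       = (if shape_zero (add_item x l) then {} else FRset (add_item x l) (Suc m))"
    proof (cases "shape_zero (add_item x l)")
      case True
      then show ?thesis
        by (auto simp: FRset_def dest!: spec[of _ "Suc 0"] simp: config_after_def)
    next
      case False
      have "(\<forall>k. 0 < k \<and> k < Suc (Suc m) \<longrightarrow> \<not> shape_zero (config_after x (take k (l # ls))))
          \<longleftrightarrow> (\<forall>k. 0 < k \<and> k < Suc m \<longrightarrow> \<not> shape_zero (config_after (add_item x l) (take k ls)))" for ls
      proof
        assume H: "\<forall>k. 0 < k \<and> k < Suc (Suc m) \<longrightarrow> \<not> shape_zero (config_after x (take k (l # ls)))"
        show "\<forall>k. 0 < k \<and> k < Suc m \<longrightarrow> \<not> shape_zero (config_after (add_item x l) (take k ls))"
        proof (intro allI impI)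
          fix k assume "0 < k \<and> k < Suc m"
          then show "\<not> shape_zero (config_after (add_item x l) (take k ls))"
            using H[rule_format, of "Suc k"] by (simp add: cfg_Cons)
        qed
      next
        assume H: "\<forall>k. 0 < k \<and> k < Suc m \<longrightarrow> \<not> shape_zero (config_after (add_item x l) (take k ls))"
        show "\<forall>k. 0 < k \<and> k < Suc (Suc m) \<longrightarrow> \<not> shape_zero (config_after x (take k (l # ls)))"
        proof (intro allI impI)
          fix k assume k: "0 < k \<and> k < Suc (Suc m)"
          then obtain k' where k': "k = Suc k'" by (cases k) auto
          show "\<not> shape_zero (config_after x (take k (l # ls)))"
          proof (cases k')
            case 0 then show ?thesis using k' False by (simp add: config_after_def)
          next
            case (Suc k'') then show ?thesis using k k' H[rule_format, of k'] by (simp add: cfg_Cons)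
          qed
        qed
      qed
      then show ?thesis using False by (auto simp: FRset_def cfg_Cons)
    qed
    then show "(\<Sum>ls\<in>{ls. length ls = Suc m \<and> (l#ls) \<in> FRset x (Suc (Suc m))}. path_prob K S lam p x (l#ls))
      = step_prob K S lam p x l * (if shape_zero (add_item x l) then 0
        else first_return_prob K S lam p (add_item x l) (Suc m))"
      by (simp add: FR_eq sum_distrib_left)
  qed simp
  finally show ?thesis .
qed

lemma G_FR: "G (step_prob K S lam p) shape_zero N x = (\<Sum>m<Suc N. first_return_prob K S lam p x m)"
proof (induction N arbitrary: x)
  case 0 then show ?case by (simp add: FR_0)
next
  case (Suc N)
  have sh: "(\<Sum>m<Suc n. first_return_prob K S lam p y m) = (\<Sum>m<n. first_return_prob K S lam p y (Suc m))" for n y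
    by (subst sum.lessThan_Suc_shift) (simp add: FR_0)
  have "(\<Sum>m<Suc (Suc N). first_return_prob K S lam p x m)
      = first_return_prob K S lam p x (Suc 0) + (\<Sum>m<N. first_return_prob K S lam p x (Suc (Suc m)))"
    unfolding sh by (simp add: sum.lessThan_Suc_shift del: sum.lessThan_Suc)
  also have "\<dots> = (\<Sum>l\<in>UNIV. step_prob K S lam p x l * (if shape_zero (add_item x l) then 1
        else (\<Sum>m<N. first_return_prob K S lam p (add_item x l) (Suc m))))"
    unfolding FR_1 FR_SS
    by (simp add: sum.swap[of _ _ "{..<N}"] sum_distrib_left flip: sum.distrib)
       (intro sum.cong refl, auto simp: sum_distrib_left)
  also have "\<dots> = G (step_prob K S lam p) shape_zero (Suc N) x"
    by (simp only: G.simps Suc.IH sh)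
  finally show ?case ..
qed


lemma exp_quad: fixes t :: real assumes "\<bar>t\<bar> \<le> 1" shows "exp t \<le> 1 + t + t^2"
proof (cases "t \<ge> 0")
  case True then show ?thesis using exp_bound assms by auto
next
  case False
  define s where "s = - t"
  have s: "0 < s" "s \<le> 1" using False assms by (auto simp: s_def)
  have "1 + s \<le> exp s" by (rule exp_ge_add_one_self)
  have "(1 + s) * (1 - s + s^2) \<ge> 1" using s by (simp add: algebra_simps power2_eq_square power3_eq_cube)
  then have "exp s * (1 - s + s^2) \<ge> 1"
    by (smt (verit) \<open>1 + s \<le> exp s\<close> mult_right_mono s(1) s(2) zero_le_power2)
  then have "exp (-s) \<le> 1 - s + s^2"
    by (simp add: exp_minus divide_simps mult.commute)
  then show ?thesis by (simp add: s_def)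
qed

definition Yf :: "real^'n::finite \<Rightarrow> real \<Rightarrow> ('n \<Rightarrow> nat) \<Rightarrow> real" where
  "Yf a c x = (\<Sum>l\<in>UNIV. a$l * real (x l)) - c * (\<Sum>l\<in>UNIV. real (x l))"

lemma Yf_add: "Yf a c (add_item x l) = Yf a c x + (a$l - c)"
proof -
  have e: "real (add_item x l l') = real (x l') + (if l' = l then 1 else 0)" for l'
    by (simp add: add_item_def)
  have e2: "a$l' * real (add_item x l l') = a$l' * real (x l') + (if l' = l then a$l else 0)" for l'
    by (simp add: e distrib_left)
  have s1: "(\<Sum>l'\<in>UNIV. a$l' * real (add_item x l l')) = (\<Sum>l'\<in>UNIV. a$l' * real (x l')) + a$l"
    by (simp only: e2 sum.distrib) simp
  have s2: "(\<Sum>l'\<in>UNIV. real (add_item x l l')) = (\<Sum>l'\<in>UNIV. real (x l')) + 1"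
    by (simp only: e sum.distrib) simp
  show ?thesis unfolding Yf_def s1 s2 by (simp add: algebra_simps)
qed

lemma Yf_zero:
  assumes "shape_zero x" "c = (\<Sum>l\<in>UNIV. a$l) / real CARD('n::finite)"
  shows "Yf a c (x::'n \<Rightarrow> nat) = 0"
proof -
  obtain v where v: "\<And>l. x l = v" using assms(1) unfolding shape_zero_def by blast
  have "CARD('n) > 0" by simp
  have "(\<Sum>l\<in>UNIV. a$l * real (x l)) = (\<Sum>l\<in>UNIV. a$l) * real v"
    by (simp add: v sum_distrib_right)
  moreover have "(\<Sum>l\<in>UNIV. real (x l)) = real CARD('n) * real v" by (simp add: v)
  ultimately show ?thesis unfolding Yf_def assms(2) using \<open>CARD('n) > 0\<close> by simp
qed


lemma path_prob_nn:
  assumes "\<And>x l. step_prob K S lam p x l \<ge> 0"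
  shows "path_prob K S lam p x ls \<ge> 0"
  using assms by (induction ls arbitrary: x) auto

theorem corollary2p1:
  fixes K :: nat and S :: "nat \<Rightarrow> 'n::finite list" and lam :: "nat \<Rightarrow> real"
  assumes "storage_model K S lam"
    and "\<not> (\<exists>\<alpha> :: nat \<Rightarrow> nat \<Rightarrow> real.
              (\<forall>i<K. \<forall>j<length (S i). \<alpha> i j \<ge> 0)
            \<and> (\<forall>i<K. (\<Sum>j<length (S i). \<alpha> i j) = lam i)
            \<and> (\<forall>l::'n. (\<Sum>i<K. \<Sum>j<length (S i). \<alpha> i j * (if l = S i ! j then 1 else 0))
                        = 1 / real (card (UNIV :: 'n set))))"
  shows "\<forall>p. routing_policy K S p \<longrightarrow> transient K S lam p"
proof (intro allI impI)
  fix p assume rp: "routing_policy K S p"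
  have smk: "\<forall>i<K. S i \<noteq> [] \<and> distinct (S i)" "\<forall>i<K. lam i > 0" "(\<Sum>i<K. lam i) = 1"
    using assms(1) unfolding storage_model_def by auto
  have pn: "\<forall>x. \<forall>i<K. (\<forall>j<length (S i). p x i j \<ge> 0) \<and> (\<Sum>j<length (S i). p x i j) = 1"
    using rp unfolding routing_policy_def by blast
  define sp where "sp = step_prob K S lam p"
  have sp_nn: "sp x l \<ge> 0" for x l
    unfolding sp_def step_prob_def using pn smk
    by (auto intro!: sum_nonneg mult_nonneg_nonneg)
  have sp_sum: "(\<Sum>l\<in>UNIV. sp x l) = 1" for x
  proof -
    have inner1: "(\<Sum>l\<in>UNIV. \<Sum>j<length (S i). p x i j * (if S i ! j = l then 1 else 0))
        = (\<Sum>j<length (S i). p x i j)" for i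
      by (subst sum.swap) (simp add: sum_distrib_left[symmetric])
    have "(\<Sum>l\<in>UNIV. sp x l) = (\<Sum>i<K. \<Sum>l\<in>UNIV. lam i * (\<Sum>j<length (S i). p x i j * (if S i ! j = l then 1 else 0)))"
      unfolding sp_def step_prob_def by (rule sum.swap)
    also have "\<dots> = (\<Sum>i<K. lam i * (\<Sum>j<length (S i). p x i j))"
      by (simp only: sum_distrib_left[symmetric] inner1)
    also have "\<dots> = (\<Sum>i<K. lam i)" using pn by simp
    finally show ?thesis using smk(3) by simp
  qed
  have dvec: "(\<chi> l. sp x l) \<in> Dk S lam K" for x
    using Dk_mem[where k=K and q="p x" and S=S and lam=lam] pn unfolding sp_def step_prob_def by auto
  define u :: "real^'n" where "u = (\<chi> l. 1 / real CARD('n))"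
  have uD: "u \<notin> Dk S lam K"
  proof
    assume "u \<in> Dk S lam K"
    from Dk_inv[OF this] smk obtain \<alpha> :: "nat \<Rightarrow> nat \<Rightarrow> real" where
      "(\<forall>i<K. \<forall>j<length (S i). \<alpha> i j \<ge> 0)" "(\<forall>i<K. (\<Sum>j<length (S i). \<alpha> i j) = lam i)"
      "(\<forall>l. (\<Sum>i<K. \<Sum>j<length (S i). \<alpha> i j * (if l = S i ! j then 1 else 0)) = u $ l)"
      using less_imp_le by blast
    then show False using assms(2) unfolding u_def by (simp; blast)
  qed
  obtain a b where ab: "inner a u < b" "\<forall>d\<in>Dk S lam K. inner a d > b"
    using separating_hyperplane_closed_point[OF _ compact_imp_closed uD] Dk_cc by blast
  define c where "c = inner a u"
  have c_eq: "c = (\<Sum>l\<in>UNIV. a$l) / real CARD('n)"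
    by (simp add: c_def u_def inner_vec_def sum_divide_distrib)
  define \<delta> where "\<delta> = b - c"
  have dpos: "\<delta> > 0" using ab(1) by (simp add: \<delta>_def c_def)
  have drift: "(\<Sum>l\<in>UNIV. sp x l * (a$l - c)) > \<delta>" for x
  proof -
    have "inner a (\<chi> l. sp x l) = (\<Sum>l\<in>UNIV. a$l * sp x l)" by (simp add: inner_vec_def)
    moreover have "(\<Sum>l\<in>UNIV. sp x l * (a$l - c)) = (\<Sum>l\<in>UNIV. a$l * sp x l) - c * (\<Sum>l\<in>UNIV. sp x l)"
      by (simp add: algebra_simps sum_subtractf sum_distrib_left)
    moreover have "b < inner a (\<chi> l. sp x l)" using ab(2) dvec[of x] by blast
    ultimately show ?thesis using sp_sum[of x] by (simp add: \<delta>_def)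
  qed
  define R where "R = 1 + (\<Sum>l\<in>UNIV. \<bar>a$l - c\<bar>)"
  have Rb: "\<bar>a$l - c\<bar> \<le> R" for l
  proof -
    have "\<bar>a$l - c\<bar> \<le> (\<Sum>l\<in>UNIV. \<bar>a$l - c\<bar>)" by (rule member_le_sum) auto
    then show ?thesis by (simp add: R_def)
  qed
  have R1: "R \<ge> 1" unfolding R_def by (simp add: sum_nonneg)
  define \<theta> where "\<theta> = min (1/R) (\<delta> / (2 * R^2))"
  have thpos: "\<theta> > 0" using R1 dpos by (simp add: \<theta>_def)
  have thR: "\<theta> * R \<le> 1" using R1 by (simp add: \<theta>_def min_def field_simps)
  have thR2: "\<theta> * R^2 \<le> \<delta> / 2"
  proof -
    have "\<theta> \<le> \<delta> / (2 * R^2)" by (simp add: \<theta>_def)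
    then have "\<theta> * R^2 \<le> \<delta> / (2 * R^2) * R^2" by (rule mult_right_mono) simp
    also have "\<dots> = \<delta> / 2" using R1 by (simp add: field_simps)
    finally show ?thesis .
  qed
  define \<rho> where "\<rho> = 1 - \<theta> * \<delta> / 2"
  have rho1: "\<rho> < 1" using thpos dpos by (simp add: \<rho>_def)
  have key: "(\<Sum>l\<in>UNIV. sp x l * exp (- \<theta> * (a$l - c))) \<le> \<rho>" for x
  proof -
    have trm: "exp (- \<theta> * (a$l - c)) \<le> 1 - \<theta> * (a$l - c) + \<theta>^2 * R^2" for l
    proof -
      have ab1: "\<bar>- \<theta> * (a$l - c)\<bar> \<le> 1"
      proof -
        have "\<bar>- \<theta> * (a$l - c)\<bar> = \<theta> * \<bar>a$l - c\<bar>" using thpos by (simp add: abs_mult)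
        also have "\<dots> \<le> \<theta> * R" using Rb[of l] thpos by (simp add: mult_left_mono)
        finally show ?thesis using thR by simp
      qed
      have sq: "(a$l - c)^2 \<le> R^2"
        using Rb[of l] by (metis abs_ge_zero power2_abs power_mono)
      have "exp (- \<theta> * (a$l - c)) \<le> 1 + (- \<theta> * (a$l - c)) + (- \<theta> * (a$l - c))^2"
        by (rule exp_quad[OF ab1])
      also have "(- \<theta> * (a$l - c))^2 = \<theta>^2 * (a$l - c)^2" by (simp add: power_mult_distrib)
      also have "\<theta>^2 * (a$l - c)^2 \<le> \<theta>^2 * R^2" using sq by (simp add: mult_left_mono)
      finally show ?thesis by simp
    qed
    have "(\<Sum>l\<in>UNIV. sp x l * exp (- \<theta> * (a$l - c)))
        \<le> (\<Sum>l\<in>UNIV. sp x l * (1 - \<theta> * (a$l - c) + \<theta>^2 * R^2))"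
      by (intro sum_mono mult_left_mono trm sp_nn)
    also have "\<dots> = (\<Sum>l\<in>UNIV. sp x l) * (1 + \<theta>^2 * R^2) - \<theta> * (\<Sum>l\<in>UNIV. sp x l * (a$l - c))"
      by (simp add: algebra_simps sum.distrib sum_subtractf sum_distrib_left sum_distrib_right)
    also have "\<dots> = 1 + \<theta>^2 * R^2 - \<theta> * (\<Sum>l\<in>UNIV. sp x l * (a$l - c))"
      using sp_sum by simp
    also have "\<dots> \<le> 1 + \<theta>^2 * R^2 - \<theta> * \<delta>"
      using drift[of x] thpos by (simp add: mult_left_mono)
    also have "\<theta>^2 * R^2 = \<theta> * (\<theta> * R^2)" by (simp add: power2_eq_square)
    also have "\<theta> * (\<theta> * R^2) \<le> \<theta> * (\<delta> / 2)" using thR2 thpos by (simp add: mult_left_mono)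
    finally show ?thesis by (simp add: \<rho>_def mult.commute)
  qed
  have keyY: "(\<Sum>l\<in>UNIV. sp x l * exp (- \<theta> * (Yf a c (add_item x l) - Yf a c x))) \<le> 1" for x
    using key[of x] rho1 by (simp add: Yf_add)
  have Gexp: "Yf a c y > 0 \<Longrightarrow> G sp (\<lambda>x. Yf a c x \<le> 0) N y \<le> exp (- \<theta> * Yf a c y)" for N y
    by (rule G_exp[OF sp_nn sp_sum keyY thpos])
  have FRnn: "first_return_prob K S lam p x m \<ge> 0" for x m
    unfolding FR_eq by (intro sum_nonneg path_prob_nn) (use sp_nn sp_def in auto)
  have rho0: "0 \<le> \<rho>"
    using key[of undefined] by (meson order_trans sum_nonneg mult_nonneg_nonneg sp_nn exp_ge_zero)
  show "transient K S lam p"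
    unfolding transient_def
  proof (intro allI impI)
    fix x :: "'n \<Rightarrow> nat" assume sz: "shape_zero x"
    have Y0: "Yf a c x = 0" using Yf_zero[OF sz c_eq] .
    have part: "(\<Sum>m<n. first_return_prob K S lam p x m) \<le> \<rho>" for n
    proof (cases n)
      case 0 then show ?thesis using rho0 by simp
    next
      case (Suc N)
      have "(\<Sum>m<n. first_return_prob K S lam p x m) = G sp shape_zero N x"
        using G_FR[of K S lam p N x] Suc sp_def by simp
      also have "\<dots> \<le> G sp (\<lambda>x. Yf a c x \<le> 0) N x"
        by (rule G_mono[OF sp_nn sp_sum]) (simp add: Yf_zero[OF _ c_eq])
      also have "\<dots> \<le> \<rho>"
      proof (cases N)
        case 0 then show ?thesis using rho0 by simp
      next
        case (Suc N')
        have "G sp (\<lambda>x. Yf a c x \<le> 0) N x \<le> (\<Sum>l\<in>UNIV. sp x l * exp (- \<theta> * Yf a c (add_item x l)))"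
          unfolding Suc G.simps
        proof (intro sum_mono mult_left_mono sp_nn)
          fix l
          show "(if Yf a c (add_item x l) \<le> 0 then 1 else G sp (\<lambda>x. Yf a c x \<le> 0) N' (add_item x l))
            \<le> exp (- \<theta> * Yf a c (add_item x l))"
            using Gexp[of "add_item x l" N'] thpos by (auto simp: mult_nonneg_nonpos)
        qed
        also have "\<dots> = (\<Sum>l\<in>UNIV. sp x l * exp (- \<theta> * (a$l - c)))"
          using Y0 by (simp add: Yf_add)
        also have "\<dots> \<le> \<rho>" by (rule key)
        finally show ?thesis .
      qed
      finally show ?thesis .
    qed
    have sm: "summable (first_return_prob K S lam p x)"
      by (rule summableI_nonneg_bounded[OF FRnn part])
    moreover have "suminf (first_return_prob K S lam p x) \<le> \<rho>"
      by (rule suminf_le_const[OF sm part])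
    ultimately show "summable (first_return_prob K S lam p x) \<and> suminf (first_return_prob K S lam p x) < 1"
      using rho1 by simp
  qed
qed

end
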